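(* Let $U$ be a discrete group with torsion and $e\in\mathbb{C}[U]$ a nontrivial projection. In $\mathbb{C}[U\wr\mathbb{Z}]$ put $e_i=t^{-i}et^i$, $f_i=1-e_i$ for $i\in\mathbb{Z}$, and for $n\ge 2$ put $q_n=f_1e_2e_3\cdots e_{n-1}f_n$ (so $q_2=f_1f_2$). If $1\le m<n$ and $1\le m'<n'$, then \[ q_{n'}t^{-m'}t^{m}q_n=\delta_{n,n'}\delta_{m,m'}\,q_n . \]
   Context: $U\wr\mathbb{Z}=(\bigoplus_{i\in\mathbb{Z}}U)\rtimes C_\infty$, where $C_\infty$ is infinite cyclic with generator $t$ acting by the shift $t^{-1}((g_n)_{n})t=(g_{n-1})_n$; $U$ is identified with the subgroup of elements $(\dots,1,u,1,\dots)$ with $u$ in position $0$. A nontrivial projection means $e=e^*=e^2$, $e\ne 0,1$. $\delta$ is the Kronecker delta. *)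

theory Defs
  imports Complex_Main "HOL-Algebra.Group"
begin

definition galg_elem :: "('g, 'b) monoid_scheme \<Rightarrow> ('g \<Rightarrow> complex) \<Rightarrow> bool" where
  "galg_elem G x \<longleftrightarrow> finite {g. x g \<noteq> 0} \<and> {g. x g \<noteq> 0} \<subseteq> carrier G"

definition conv :: "('g, 'b) monoid_scheme \<Rightarrow> ('g \<Rightarrow> complex) \<Rightarrow> ('g \<Rightarrow> complex) \<Rightarrow> ('g \<Rightarrow> complex)" where
  "conv G x y = (\<lambda>g. if g \<in> carrier G
      then (\<Sum>h \<in> {h \<in> carrier G. x h \<noteq> 0}. x h * y (inv\<^bsub>G\<^esub> h \<otimes>\<^bsub>G\<^esub> g)) else 0)"

definition gstar :: "('g, 'b) monoid_scheme \<Rightarrow> ('g \<Rightarrow> complex) \<Rightarrow> ('g \<Rightarrow> complex)" where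
  "gstar G x = (\<lambda>g. if g \<in> carrier G then cnj (x (inv\<^bsub>G\<^esub> g)) else 0)"

definition gbasis :: "'g \<Rightarrow> ('g \<Rightarrow> complex)" where
  "gbasis g = (\<lambda>h. if h = g then 1 else 0)"

definition gunit :: "('g, 'b) monoid_scheme \<Rightarrow> ('g \<Rightarrow> complex)" where
  "gunit G = gbasis \<one>\<^bsub>G\<^esub>"

definition nontriv_projection :: "('g, 'b) monoid_scheme \<Rightarrow> ('g \<Rightarrow> complex) \<Rightarrow> bool" where
  "nontriv_projection G e \<longleftrightarrow> galg_elem G e \<and> gstar G e = e \<and> conv G e e = e
     \<and> e \<noteq> (\<lambda>_. 0) \<and> e \<noteq> gunit G"

definition has_torsion :: "('g, 'b) monoid_scheme \<Rightarrow> bool" where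
  "has_torsion G \<longleftrightarrow> (\<exists>u \<in> carrier G. u \<noteq> \<one>\<^bsub>G\<^esub> \<and> (\<exists>n::nat. n > 0 \<and> u [^]\<^bsub>G\<^esub> n = \<one>\<^bsub>G\<^esub>))"

text \<open>An element (g, k) stands for g t^k with g in the restricted direct sum of copies of U.
  Since t^{-1} g t = sigma(g) with sigma(g)_n = g_{n-1}, one has t^k h t^{-k} = (n \<mapsto> h_{n+k}),
  hence (g t^k)(h t^r) = (n \<mapsto> g_n h_{n+k}) t^{k+r}.\<close>
definition wreath :: "('a, 'b) monoid_scheme \<Rightarrow> ((int \<Rightarrow> 'a) \<times> int) monoid" where
  "wreath U = \<lparr> carrier = {(g, k). (\<forall>n. g n \<in> carrier U) \<and> finite {n. g n \<noteq> \<one>\<^bsub>U\<^esub>}},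
      mult = (\<lambda>x y. (\<lambda>n. fst x n \<otimes>\<^bsub>U\<^esub> fst y (n + snd x), snd x + snd y)),
      one = (\<lambda>_. \<one>\<^bsub>U\<^esub>, 0) \<rparr>"

definition tpow :: "('a, 'b) monoid_scheme \<Rightarrow> int \<Rightarrow> (int \<Rightarrow> 'a) \<times> int" where
  "tpow U k = (\<lambda>_. \<one>\<^bsub>U\<^esub>, k)"

definition wemb :: "('a, 'b) monoid_scheme \<Rightarrow> ('a \<Rightarrow> complex) \<Rightarrow> ((int \<Rightarrow> 'a) \<times> int \<Rightarrow> complex)" where
  "wemb U x = (\<lambda>(g, k). if k = 0 \<and> (\<forall>n. n \<noteq> 0 \<longrightarrow> g n = \<one>\<^bsub>U\<^esub>) then x (g 0) else 0)"

definition e_i :: "('a, 'b) monoid_scheme \<Rightarrow> ('a \<Rightarrow> complex) \<Rightarrow> int \<Rightarrow> ((int \<Rightarrow> 'a) \<times> int \<Rightarrow> complex)" where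
  "e_i U e i = conv (wreath U) (conv (wreath U) (gbasis (tpow U (-i))) (wemb U e)) (gbasis (tpow U i))"

definition f_i :: "('a, 'b) monoid_scheme \<Rightarrow> ('a \<Rightarrow> complex) \<Rightarrow> int \<Rightarrow> ((int \<Rightarrow> 'a) \<times> int \<Rightarrow> complex)" where
  "f_i U e i = gunit (wreath U) - e_i U e i"

definition gprod_list :: "('g, 'b) monoid_scheme \<Rightarrow> ('g \<Rightarrow> complex) list \<Rightarrow> ('g \<Rightarrow> complex)" where
  "gprod_list G xs = foldr (conv G) xs (gunit G)"

definition q_n :: "('a, 'b) monoid_scheme \<Rightarrow> ('a \<Rightarrow> complex) \<Rightarrow> int \<Rightarrow> ((int \<Rightarrow> 'a) \<times> int \<Rightarrow> complex)" where
  "q_n U e n = conv (wreath U)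
      (conv (wreath U) (f_i U e 1) (gprod_list (wreath U) (map (e_i U e) [2..n-1])))
      (f_i U e n)"

end

theory Submission
  imports Defs "HOL-Library.FuncSet"
begin


lemma wreath_simps:
  "carrier (wreath U) = {(g, k). (\<forall>n. g n \<in> carrier U) \<and> finite {n. g n \<noteq> \<one>\<^bsub>U\<^esub>}}"
  "x \<otimes>\<^bsub>wreath U\<^esub> y = (\<lambda>n. fst x n \<otimes>\<^bsub>U\<^esub> fst y (n + snd x), snd x + snd y)"
  "\<one>\<^bsub>wreath U\<^esub> = (\<lambda>_. \<one>\<^bsub>U\<^esub>, 0)"
  by (simp_all add: wreath_def)

lemma finite_supp_mult:
  fixes g h :: "int \<Rightarrow> 'a" and k :: int
  assumes "group U" "\<forall>n. g n \<in> carrier U" "\<forall>n. h n \<in> carrier U"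
    "finite {n. g n \<noteq> \<one>\<^bsub>U\<^esub>}" "finite {n. h n \<noteq> \<one>\<^bsub>U\<^esub>}"
  shows "finite {n. g n \<otimes>\<^bsub>U\<^esub> h (n + k) \<noteq> \<one>\<^bsub>U\<^esub>}"
proof -
  interpret group U by fact
  have "{n. g n \<otimes>\<^bsub>U\<^esub> h (n + k) \<noteq> \<one>\<^bsub>U\<^esub>} \<subseteq> {n. g n \<noteq> \<one>\<^bsub>U\<^esub>} \<union> (\<lambda>n. n - k) ` {n. h n \<noteq> \<one>\<^bsub>U\<^esub>}"
  proof
    fix n assume "n \<in> {n. g n \<otimes>\<^bsub>U\<^esub> h (n + k) \<noteq> \<one>\<^bsub>U\<^esub>}"
    then have "g n \<noteq> \<one>\<^bsub>U\<^esub> \<or> h (n + k) \<noteq> \<one>\<^bsub>U\<^esub>" using assms by auto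
    then show "n \<in> {n. g n \<noteq> \<one>\<^bsub>U\<^esub>} \<union> (\<lambda>n. n - k) ` {n. h n \<noteq> \<one>\<^bsub>U\<^esub>}"
      by (auto intro!: image_eqI[where x="n+k"])
  qed
  then show ?thesis using assms by (meson finite_Un finite_imageI finite_subset)
qed

lemma finite_supp_inv:
  fixes g :: "int \<Rightarrow> 'a" and d :: int
  assumes "group U" "\<forall>n. g n \<in> carrier U" "finite {n. g n \<noteq> \<one>\<^bsub>U\<^esub>}"
  shows "finite {n. inv\<^bsub>U\<^esub> g (n - d) \<noteq> \<one>\<^bsub>U\<^esub>}"
proof -
  interpret group U by fact
  have "{n. inv\<^bsub>U\<^esub> g (n - d) \<noteq> \<one>\<^bsub>U\<^esub>} \<subseteq> (\<lambda>n. n + d) ` {n. g n \<noteq> \<one>\<^bsub>U\<^esub>}"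
    by (auto intro!: image_eqI[where x="_ - d"])
  then show ?thesis using assms finite_subset by blast
qed

lemma wreath_group:
  assumes "group U" shows "group (wreath U)"
proof -
  interpret group U by fact
  show ?thesis
  proof (rule groupI)
    fix x y assume "x \<in> carrier (wreath U)" "y \<in> carrier (wreath U)"
    then show "x \<otimes>\<^bsub>wreath U\<^esub> y \<in> carrier (wreath U)"
      using finite_supp_mult[OF assms] by (auto simp: wreath_simps)
  next
    show "\<one>\<^bsub>wreath U\<^esub> \<in> carrier (wreath U)" by (simp add: wreath_simps)
  next
    fix x y z assume "x \<in> carrier (wreath U)" "y \<in> carrier (wreath U)" "z \<in> carrier (wreath U)"
    then show "x \<otimes>\<^bsub>wreath U\<^esub> y \<otimes>\<^bsub>wreath U\<^esub> z = x \<otimes>\<^bsub>wreath U\<^esub> (y \<otimes>\<^bsub>wreath U\<^esub> z)"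
      by (auto simp: wreath_simps m_assoc add.assoc)
  next
    fix x assume "x \<in> carrier (wreath U)"
    then show "\<one>\<^bsub>wreath U\<^esub> \<otimes>\<^bsub>wreath U\<^esub> x = x"
      by (auto simp: wreath_simps)
  next
    fix x assume x: "x \<in> carrier (wreath U)"
    obtain g d where xd: "x = (g, d)" by fastforce
    let ?y = "(\<lambda>n. inv\<^bsub>U\<^esub> g (n - d), - d)"
    have "?y \<in> carrier (wreath U)" using x xd finite_supp_inv[OF assms] by (auto simp: wreath_simps)
    moreover have "?y \<otimes>\<^bsub>wreath U\<^esub> x = \<one>\<^bsub>wreath U\<^esub>" using x xd by (auto simp: wreath_simps)
    ultimately show "\<exists>y\<in>carrier (wreath U). y \<otimes>\<^bsub>wreath U\<^esub> x = \<one>\<^bsub>wreath U\<^esub>" by blast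
  qed
qed

lemma wreath_inv:
  assumes "group U" "(g, d) \<in> carrier (wreath U)"
  shows "inv\<^bsub>wreath U\<^esub> (g, d) = (\<lambda>n. inv\<^bsub>U\<^esub> g (n - d), - d)"
proof -
  interpret U: group U by fact
  interpret W: group "wreath U" by (rule wreath_group[OF assms(1)])
  have y: "(\<lambda>n. inv\<^bsub>U\<^esub> g (n - d), - d) \<in> carrier (wreath U)"
    using assms finite_supp_inv[OF assms(1)] by (auto simp: wreath_simps)
  have "(\<lambda>n. inv\<^bsub>U\<^esub> g (n - d), - d) \<otimes>\<^bsub>wreath U\<^esub> (g, d) = \<one>\<^bsub>wreath U\<^esub>"
    using assms by (auto simp: wreath_simps)
  then show ?thesis using W.inv_equality y assms(2) by blast
qed



lemma conv_alt:
  assumes "finite S" "{h. x h \<noteq> 0} \<subseteq> S" "S \<subseteq> carrier G"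
  shows "conv G x y g = (if g \<in> carrier G then (\<Sum>h\<in>S. x h * y (inv\<^bsub>G\<^esub> h \<otimes>\<^bsub>G\<^esub> g)) else 0)"
proof -
  have "(\<Sum>h \<in> {h \<in> carrier G. x h \<noteq> 0}. x h * y (inv\<^bsub>G\<^esub> h \<otimes>\<^bsub>G\<^esub> g))
     = (\<Sum>h\<in>S. x h * y (inv\<^bsub>G\<^esub> h \<otimes>\<^bsub>G\<^esub> g))"
    by (rule sum.mono_neutral_left) (use assms in auto)
  then show ?thesis by (simp add: conv_def)
qed

lemma galg_gbasis: "g \<in> carrier G \<Longrightarrow> galg_elem G (gbasis g)"
  by (auto simp: galg_elem_def gbasis_def)

lemma galg_diff: "galg_elem G x \<Longrightarrow> galg_elem G y \<Longrightarrow> galg_elem G (x - y)"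
proof -
  assume a: "galg_elem G x" "galg_elem G y"
  have "{g. (x - y) g \<noteq> 0} \<subseteq> {g. x g \<noteq> 0} \<union> {g. y g \<noteq> 0}" by auto
  then show ?thesis using a unfolding galg_elem_def by (meson finite_Un finite_subset le_sup_iff order_trans)
qed

lemma galg_zero: "galg_elem G (\<lambda>_. 0)" by (simp add: galg_elem_def)

lemma galg_conv:
  fixes G (structure)
  assumes "group G" "galg_elem G x" "galg_elem G y"
  shows "galg_elem G (conv G x y)"
proof -
  interpret group G by fact
  let ?A = "{g. x g \<noteq> 0}" and ?B = "{g. y g \<noteq> 0}"
  have "{g. conv G x y g \<noteq> 0} \<subseteq> (\<lambda>(a, b). a \<otimes> b) ` (?A \<times> ?B)"
  proof
    fix g assume "g \<in> {g. conv G x y g \<noteq> 0}"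
    then have g: "g \<in> carrier G" and "(\<Sum>h \<in> {h \<in> carrier G. x h \<noteq> 0}. x h * y (inv h \<otimes> g)) \<noteq> 0"
      by (auto simp: conv_def split: if_splits)
    then obtain h where "h \<in> {h \<in> carrier G. x h \<noteq> 0}" "x h * y (inv h \<otimes> g) \<noteq> 0"
      using sum.not_neutral_contains_not_neutral by blast
    then have h: "h \<in> carrier G" "x h \<noteq> 0" "y (inv h \<otimes> g) \<noteq> 0" by auto
    have "g = h \<otimes> (inv h \<otimes> g)" using h g by (simp add: m_assoc[symmetric])
    then show "g \<in> (\<lambda>(a, b). a \<otimes> b) ` (?A \<times> ?B)" using h by force
  qed
  moreover have "finite ((\<lambda>(a, b). a \<otimes> b) ` (?A \<times> ?B))"
    using assms by (auto simp: galg_elem_def)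
  ultimately show ?thesis by (auto simp: galg_elem_def conv_def finite_subset split: if_splits)
qed

lemma conv_unit_left:
  fixes G (structure)
  assumes "group G" "galg_elem G x"
  shows "conv G (gbasis \<one>\<^bsub>G\<^esub>) x = x"
proof
  interpret group G by fact
  fix g
  have "conv G (gbasis \<one>) x g = (if g \<in> carrier G then (\<Sum>h\<in>{\<one>}. gbasis \<one> h * x (inv h \<otimes> g)) else 0)"
    by (rule conv_alt) (auto simp: gbasis_def)
  then show "conv G (gbasis \<one>) x g = x g" using assms(2) by (auto simp: gbasis_def galg_elem_def)
qed

lemma conv_unit_right:
  fixes G (structure)
  assumes "group G" "galg_elem G x"
  shows "conv G x (gbasis \<one>\<^bsub>G\<^esub>) = x"
proof
  interpret group G by fact
  fix g
  let ?A = "{g. x g \<noteq> 0}"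
  have A: "finite ?A" "?A \<subseteq> carrier G" using assms(2) by (auto simp: galg_elem_def)
  have c: "conv G x (gbasis \<one>) g = (if g \<in> carrier G then (\<Sum>h\<in>?A. x h * gbasis \<one> (inv h \<otimes> g)) else 0)"
    by (rule conv_alt) (use A in auto)
  show "conv G x (gbasis \<one>) g = x g"
  proof (cases "g \<in> carrier G")
    case True
    have "(\<Sum>h\<in>?A. x h * gbasis \<one> (inv h \<otimes> g)) = (\<Sum>h\<in>?A. if h = g then x h else 0)"
    proof (rule sum.cong)
      fix h assume "h \<in> ?A"
      then have h: "h \<in> carrier G" using A by auto
      have "(inv h \<otimes> g = \<one>) = (h = g)" using h True
        by (metis inv_equality inv_inv l_inv inv_closed)
      then show "x h * gbasis \<one> (inv h \<otimes> g) = (if h = g then x h else 0)" by (simp add: gbasis_def)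
    qed simp
    also have "\<dots> = x g" using A by (simp add: sum.delta)
    finally show ?thesis using c True by simp
  next
    case False then show ?thesis using c A by auto
  qed
qed

lemma conv_diff_left:
  assumes "galg_elem G x" "galg_elem G y"
  shows "conv G (x - y) z = conv G x z - conv G y z"
proof
  fix g
  let ?S = "{g. x g \<noteq> 0} \<union> {g. y g \<noteq> 0}"
  have S: "finite ?S" "?S \<subseteq> carrier G" using assms by (auto simp: galg_elem_def)
  have "conv G (x - y) z g = (if g \<in> carrier G then (\<Sum>h\<in>?S. (x - y) h * z (inv\<^bsub>G\<^esub> h \<otimes>\<^bsub>G\<^esub> g)) else 0)"
    by (rule conv_alt) (use S in auto)
  moreover have "conv G x z g = (if g \<in> carrier G then (\<Sum>h\<in>?S. x h * z (inv\<^bsub>G\<^esub> h \<otimes>\<^bsub>G\<^esub> g)) else 0)"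
    by (rule conv_alt) (use S in auto)
  moreover have "conv G y z g = (if g \<in> carrier G then (\<Sum>h\<in>?S. y h * z (inv\<^bsub>G\<^esub> h \<otimes>\<^bsub>G\<^esub> g)) else 0)"
    by (rule conv_alt) (use S in auto)
  ultimately show "conv G (x - y) z g = (conv G x z - conv G y z) g"
    by (simp add: left_diff_distrib sum_subtractf)
qed

lemma conv_diff_right:
  shows "conv G x (y - z) = conv G x y - conv G x z"
  by (rule ext) (simp add: conv_def right_diff_distrib sum_subtractf)



definition tel :: "('a, 'b) monoid_scheme \<Rightarrow> int \<Rightarrow> int set \<Rightarrow> (int \<Rightarrow> 'a \<Rightarrow> complex) \<Rightarrow> ((int \<Rightarrow> 'a) \<times> int \<Rightarrow> complex)" where
  "tel U d S \<phi> = (\<lambda>(x, k). if k = d \<and> (\<forall>n. x n \<in> carrier U) \<and> (\<forall>n. n \<notin> S \<longrightarrow> x n = \<one>\<^bsub>U\<^esub>)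
      then (\<Prod>j\<in>S. \<phi> j (x j)) else 0)"

lemma conv_tel:
  fixes U :: "('a, 'b) monoid_scheme" (structure) and d r :: int
  assumes grp: "group U" and finS: "finite S" and gphi: "\<And>j. galg_elem U (\<phi> j)" and gpsi: "\<And>j. galg_elem U (\<psi> j)"
  shows "conv (wreath U) (tel U d S \<phi>) (tel U r ((\<lambda>j. j + d) ` S) \<psi>)
       = tel U (d + r) S (\<lambda>j. conv U (\<phi> j) (\<psi> (j + d)))"
proof (rule ext)
  interpret group U by fact
  fix z :: "(int \<Rightarrow> 'a) \<times> int"
  obtain x :: "int \<Rightarrow> 'a" and k :: int where z: "z = (x, k)" by fastforce
  let ?W = "wreath U"
  let ?X = "tel U d S \<phi>" and ?Y = "tel U r ((\<lambda>j. j + d) ` S) \<psi>"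
  let ?P = "PiE S (\<lambda>j. {a. \<phi> j a \<noteq> 0})"
  define emb where "emb = (\<lambda>\<sigma>. ((\<lambda>n. if n \<in> S then \<sigma> n else \<one>\<^bsub>U\<^esub>) :: int \<Rightarrow> 'a, d))"
  have suppC: "\<And>j a. \<phi> j a \<noteq> 0 \<Longrightarrow> a \<in> carrier U" using gphi by (auto simp: galg_elem_def)
  have finP: "finite ?P" using finS gphi by (intro finite_PiE) (auto simp: galg_elem_def)
  have embC: "emb \<sigma> \<in> carrier ?W" if "\<sigma> \<in> ?P" for \<sigma>
  proof -
    have "{n. (if n \<in> S then \<sigma> n else \<one>) \<noteq> \<one>} \<subseteq> S" by auto
    then show ?thesis using that finS suppC by (auto simp: emb_def wreath_simps PiE_def Pi_def intro: finite_subset)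
  qed
  have Xemb: "?X (emb \<sigma>) = (\<Prod>j\<in>S. \<phi> j (\<sigma> j))" if "\<sigma> \<in> ?P" for \<sigma>
    using that suppC by (auto simp: emb_def tel_def PiE_def Pi_def intro!: prod.cong)
  have supp: "{h \<in> carrier ?W. ?X h \<noteq> 0} \<subseteq> emb ` ?P"
  proof
    fix h assume h: "h \<in> {h \<in> carrier ?W. ?X h \<noteq> 0}"
    obtain g k' where hg: "h = (g, k')" by fastforce
    have c: "k' = d" "\<forall>n. n \<notin> S \<longrightarrow> g n = \<one>" "(\<Prod>j\<in>S. \<phi> j (g j)) \<noteq> 0"
      using h hg by (auto simp: tel_def split: if_splits)
    have "\<forall>j\<in>S. \<phi> j (g j) \<noteq> 0" using c(3) finS by auto
    then have "restrict g S \<in> ?P" by auto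
    moreover have "emb (restrict g S) = h" using c hg by (auto simp: emb_def)
    ultimately show "h \<in> emb ` ?P" by blast
  qed
  have inj: "inj_on emb ?P"
  proof (rule inj_onI)
    fix \<sigma> \<tau> assume "\<sigma> \<in> ?P" "\<tau> \<in> ?P" "emb \<sigma> = emb \<tau>"
    then have "\<forall>i\<in>S. \<sigma> i = \<tau> i" unfolding emb_def by (metis (mono_tags, lifting) fst_conv)
    then show "\<sigma> = \<tau>" using PiE_ext \<open>\<sigma> \<in> ?P\<close> \<open>\<tau> \<in> ?P\<close> by blast
  qed
  have Yterm: "?Y (inv\<^bsub>?W\<^esub> (emb \<sigma>) \<otimes>\<^bsub>?W\<^esub> (x, k))
      = (if k = d + r \<and> (\<forall>n. n \<notin> S \<longrightarrow> x n = \<one>) then (\<Prod>j\<in>S. \<psi> (j + d) (inv (\<sigma> j) \<otimes> x j)) else 0)"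
    if s: "\<sigma> \<in> ?P" and xc: "\<forall>n. x n \<in> carrier U" for \<sigma>
  proof -
    define s' where "s' = (\<lambda>n. if n \<in> S then \<sigma> n else \<one>)"
    have s'C: "\<And>n. s' n \<in> carrier U" using s suppC by (auto simp: s'_def PiE_def Pi_def)
    have "inv\<^bsub>?W\<^esub> (emb \<sigma>) = (\<lambda>n. inv (s' (n - d)), - d)"
      using wreath_inv[OF grp, of s' d] embC[OF s] by (simp add: emb_def s'_def)
    then have e: "inv\<^bsub>?W\<^esub> (emb \<sigma>) \<otimes>\<^bsub>?W\<^esub> (x, k) = (\<lambda>n. inv (s' (n - d)) \<otimes> x (n - d), k - d)"
      by (simp add: wreath_simps)
    have cond: "(\<forall>n. n \<notin> (\<lambda>j. j + d) ` S \<longrightarrow> inv (s' (n - d)) \<otimes> x (n - d) = \<one>) = (\<forall>n. n \<notin> S \<longrightarrow> x n = \<one>)"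
    proof
      assume a: "\<forall>n. n \<notin> (\<lambda>j. j + d) ` S \<longrightarrow> inv (s' (n - d)) \<otimes> x (n - d) = \<one>"
      show "\<forall>n. n \<notin> S \<longrightarrow> x n = \<one>"
      proof (intro allI impI)
        fix n assume "n \<notin> S"
        then have "n + d \<notin> (\<lambda>j. j + d) ` S" by auto
        then have "inv (s' n) \<otimes> x n = \<one>" using a by (metis add_diff_cancel_right')
        then show "x n = \<one>" using \<open>n \<notin> S\<close> xc by (simp add: s'_def)
      qed
    next
      assume a: "\<forall>n. n \<notin> S \<longrightarrow> x n = \<one>"
      show "\<forall>n. n \<notin> (\<lambda>j. j + d) ` S \<longrightarrow> inv (s' (n - d)) \<otimes> x (n - d) = \<one>"
      proof (intro allI impI)
        fix n assume "n \<notin> (\<lambda>j. j + d) ` S"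
        then have "n - d \<notin> S" by (metis diff_add_cancel image_eqI)
        then show "inv (s' (n - d)) \<otimes> x (n - d) = \<one>" using a by (simp add: s'_def)
      qed
    qed
    have prod: "(\<Prod>j\<in>(\<lambda>j. j + d) ` S. \<psi> j (inv (s' (j - d)) \<otimes> x (j - d)))
        = (\<Prod>j\<in>S. \<psi> (j + d) (inv (\<sigma> j) \<otimes> x j))"
      by (subst prod.reindex) (auto simp: s'_def inj_on_def intro!: prod.cong)
    have cc: "\<forall>n. inv (s' (n - d)) \<otimes> x (n - d) \<in> carrier U" using s'C xc by auto
    show ?thesis unfolding e tel_def using cond prod cc by auto
  qed
  show "conv ?W ?X ?Y z = tel U (d + r) S (\<lambda>j. conv U (\<phi> j) (\<psi> (j + d))) z"
  proof (cases "z \<in> carrier ?W")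
    case False
    have "tel U (d + r) S (\<lambda>j. conv U (\<phi> j) (\<psi> (j + d))) z = 0"
    proof (rule ccontr)
      assume "tel U (d + r) S (\<lambda>j. conv U (\<phi> j) (\<psi> (j + d))) z \<noteq> 0"
      then have "(\<forall>n. x n \<in> carrier U) \<and> (\<forall>n. n \<notin> S \<longrightarrow> x n = \<one>)" by (auto simp: z tel_def split: if_splits)
      then have "z \<in> carrier ?W" using finS by (auto simp: z wreath_simps intro: finite_subset)
      then show False using False by simp
    qed
    then show ?thesis using False by (simp add: conv_def)
  next
    case True
    then have xc: "\<forall>n. x n \<in> carrier U" by (simp add: z wreath_simps)
    have "conv ?W ?X ?Y z = (\<Sum>h\<in>emb ` ?P. ?X h * ?Y (inv\<^bsub>?W\<^esub> h \<otimes>\<^bsub>?W\<^esub> z))"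
      unfolding conv_def using True
      by (simp, intro sum.mono_neutral_left) (use finP supp embC in auto)
    also have "\<dots> = (\<Sum>\<sigma>\<in>?P. ?X (emb \<sigma>) * ?Y (inv\<^bsub>?W\<^esub> (emb \<sigma>) \<otimes>\<^bsub>?W\<^esub> z))"
      by (rule sum.reindex[OF inj, unfolded comp_def])
    also have "\<dots> = (\<Sum>\<sigma>\<in>?P. (\<Prod>j\<in>S. \<phi> j (\<sigma> j)) *
        (if k = d + r \<and> (\<forall>n. n \<notin> S \<longrightarrow> x n = \<one>) then (\<Prod>j\<in>S. \<psi> (j + d) (inv (\<sigma> j) \<otimes> x j)) else 0))"
      by (rule sum.cong) (simp_all add: Xemb Yterm xc z)
    also have "\<dots> = tel U (d + r) S (\<lambda>j. conv U (\<phi> j) (\<psi> (j + d))) z"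
    proof (cases "k = d + r \<and> (\<forall>n. n \<notin> S \<longrightarrow> x n = \<one>)")
      case False then show ?thesis by (simp only: if_not_P[OF False]) (use False in \<open>auto simp: z tel_def\<close>)
    next
      case C: True
      have "(\<Sum>\<sigma>\<in>?P. (\<Prod>j\<in>S. \<phi> j (\<sigma> j)) * (\<Prod>j\<in>S. \<psi> (j + d) (inv (\<sigma> j) \<otimes> x j)))
          = (\<Sum>\<sigma>\<in>?P. \<Prod>j\<in>S. \<phi> j (\<sigma> j) * \<psi> (j + d) (inv (\<sigma> j) \<otimes> x j))"
        by (simp add: prod.distrib)
      also have "\<dots> = (\<Prod>j\<in>S. \<Sum>a\<in>{a. \<phi> j a \<noteq> 0}. \<phi> j a * \<psi> (j + d) (inv a \<otimes> x j))"
        by (rule prod_sum_PiE[symmetric]) (use finS gphi in \<open>auto simp: galg_elem_def\<close>)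
      also have "\<dots> = (\<Prod>j\<in>S. conv U (\<phi> j) (\<psi> (j + d)) (x j))"
      proof (rule prod.cong)
        fix j assume "j \<in> S"
        show "(\<Sum>a\<in>{a. \<phi> j a \<noteq> 0}. \<phi> j a * \<psi> (j + d) (inv a \<otimes> x j)) = conv U (\<phi> j) (\<psi> (j + d)) (x j)"
          by (subst conv_alt[where S="{a. \<phi> j a \<noteq> 0}"]) (use gphi xc in \<open>auto simp: galg_elem_def\<close>)
      qed simp
      finally show ?thesis using C xc by (simp add: z tel_def)
    qed
    finally show ?thesis .
  qed
qed



lemma tel_cong: "(\<And>j. j \<in> S \<Longrightarrow> \<phi> j = \<psi> j) \<Longrightarrow> tel U d S \<phi> = tel U d S \<psi>"
  by (auto simp: tel_def intro!: ext prod.cong)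

lemma tel_pad:
  assumes "finite S'" "S \<subseteq> S'" "\<And>j. j \<in> S' - S \<Longrightarrow> \<phi> j = gbasis \<one>\<^bsub>U\<^esub>"
  shows "tel U d S \<phi> = tel U d S' \<phi>"
proof (rule ext)
  fix z :: "(int \<Rightarrow> 'a) \<times> int"
  obtain x :: "int \<Rightarrow> 'a" and k :: int where z: "z = (x, k)" by fastforce
  have split: "S' = S \<union> (S' - S)" using assms(2) by auto
  have fS: "finite S" using assms finite_subset by blast
  have p: "(\<Prod>j\<in>S'. \<phi> j (x j)) = (\<Prod>j\<in>S. \<phi> j (x j)) * (\<Prod>j\<in>S' - S. \<phi> j (x j))"
    by (subst split, subst prod.union_disjoint) (use assms fS in auto)
  have q: "(\<Prod>j\<in>S' - S. \<phi> j (x j)) = (if \<forall>j\<in>S' - S. x j = \<one>\<^bsub>U\<^esub> then 1 else 0)"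
  proof -
    have "(\<Prod>j\<in>S' - S. \<phi> j (x j)) = (\<Prod>j\<in>S' - S. if x j = \<one>\<^bsub>U\<^esub> then 1 else 0)"
      by (rule prod.cong) (auto simp: assms(3) gbasis_def)
    also have "\<dots> = (if \<forall>j\<in>S' - S. x j = \<one>\<^bsub>U\<^esub> then 1 else 0)"
      using assms(1) by (auto simp: prod.neutral intro: prod_zero)
    finally show ?thesis .
  qed
  show "tel U d S \<phi> z = tel U d S' \<phi> z"
    using assms(2) by (auto simp: z tel_def p q)
qed

lemma tel_zero:
  assumes "finite S" "j \<in> S" "\<phi> j = (\<lambda>_. 0)"
  shows "tel U d S \<phi> = (\<lambda>_. 0)"
proof (rule ext)
  fix z :: "(int \<Rightarrow> 'a) \<times> int"
  obtain x :: "int \<Rightarrow> 'a" and k :: int where z: "z = (x, k)" by fastforce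
  have "(\<Prod>j\<in>S. \<phi> j (x j)) = 0" using assms by (intro prod_zero) (auto intro!: bexI[of _ j])
  then show "tel U d S \<phi> z = 0" by (simp add: tel_def z)
qed

lemma gbasis_tpow_tel: "group U \<Longrightarrow> gbasis (tpow U a) = tel U a {} \<phi>"
  by (auto simp: gbasis_def tpow_def tel_def group.is_monoid intro!: ext)

lemma gunit_tel: "group U \<Longrightarrow> gunit (wreath U) = tel U 0 {} \<phi>"
  by (auto simp: gunit_def gbasis_def wreath_simps tel_def group.is_monoid intro!: ext)

lemma wemb_tel: "group U \<Longrightarrow> galg_elem U e \<Longrightarrow> wemb U e = tel U 0 {0} (\<lambda>_. e)"
proof (rule ext)
  assume g: "group U" and e: "galg_elem U e"
  have one: "\<one>\<^bsub>U\<^esub> \<in> carrier U" using g by (simp add: group.is_monoid monoid.one_closed)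
  fix z :: "(int \<Rightarrow> 'a) \<times> int"
  obtain x :: "int \<Rightarrow> 'a" and k :: int where z: "z = (x, k)" by fastforce
  have "e (x 0) = 0" if "x 0 \<notin> carrier U" using that e by (auto simp: galg_elem_def)
  moreover have "(\<forall>n. x n \<in> carrier U)" if "x 0 \<in> carrier U" "\<forall>n. n \<noteq> 0 \<longrightarrow> x n = \<one>\<^bsub>U\<^esub>"
    using that one by (metis)
  ultimately show "wemb U e z = tel U 0 {0} (\<lambda>_. e) z"
    by (auto simp: wemb_def tel_def z)
qed

lemma tel_single_diff: "tel U d {i} \<phi> - tel U d {i} \<psi> = tel U d {i} (\<lambda>j. \<phi> j - \<psi> j)"
  by (auto simp: tel_def intro!: ext)

lemma conv_tel_gen:
  fixes U :: "('a, 'b) monoid_scheme" and d r :: int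
  assumes grp: "group U" and finS: "finite S" and S1: "S1 \<subseteq> S" and S2: "S2 \<subseteq> (\<lambda>j. j + d) ` S"
    and g1: "\<And>j. j \<in> S1 \<Longrightarrow> galg_elem U (\<phi> j)" and g2: "\<And>j. j \<in> S2 \<Longrightarrow> galg_elem U (\<psi> j)"
  shows "conv (wreath U) (tel U d S1 \<phi>) (tel U r S2 \<psi>)
    = tel U (d + r) S (\<lambda>j. conv U (if j \<in> S1 then \<phi> j else gbasis \<one>\<^bsub>U\<^esub>)
                                   (if j + d \<in> S2 then \<psi> (j + d) else gbasis \<one>\<^bsub>U\<^esub>))"
proof -
  interpret group U by fact
  let ?p = "\<lambda>j. if j \<in> S1 then \<phi> j else gbasis \<one>\<^bsub>U\<^esub>"
  let ?q = "\<lambda>j. if j \<in> S2 then \<psi> j else gbasis \<one>\<^bsub>U\<^esub>"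
  have a: "tel U d S1 \<phi> = tel U d S ?p"
    by (subst tel_cong[where \<psi>="?p"]) (auto intro!: tel_pad finS S1)
  have b: "tel U r S2 \<psi> = tel U r ((\<lambda>j. j + d) ` S) ?q"
    by (subst tel_cong[where \<psi>="?q"]) (auto intro!: tel_pad finS S2)
  have gp: "\<And>j. galg_elem U (?p j)" using g1 galg_gbasis[of "\<one>\<^bsub>U\<^esub>" U] by auto
  have gq: "\<And>j. galg_elem U (?q j)" using g2 galg_gbasis[of "\<one>\<^bsub>U\<^esub>" U] by auto
  show ?thesis unfolding a b by (rule conv_tel[OF grp finS gp gq])
qed



locale proj_setup =
  fixes U :: "('a, 'b) monoid_scheme" and e :: "'a \<Rightarrow> complex"
  assumes grp: "group U" and ge: "galg_elem U e" and ee: "conv U e e = e"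
begin

abbreviation "d1 \<equiv> gbasis \<one>\<^bsub>U\<^esub>"
abbreviation "F \<equiv> d1 - e"

lemma one_in: "\<one>\<^bsub>U\<^esub> \<in> carrier U" using grp by (simp add: group.is_monoid monoid.one_closed)
lemma g1: "galg_elem U d1" by (rule galg_gbasis[OF one_in])
lemma gF: "galg_elem U F" by (rule galg_diff[OF g1 ge])
lemma c11: "conv U d1 d1 = d1" by (rule conv_unit_left[OF grp g1])
lemma c1e: "conv U d1 e = e" by (rule conv_unit_left[OF grp ge])
lemma ce1: "conv U e d1 = e" by (rule conv_unit_right[OF grp ge])
lemma c1F: "conv U d1 F = F" by (rule conv_unit_left[OF grp gF])
lemma cF1: "conv U F d1 = F" by (rule conv_unit_right[OF grp gF])
lemma cFe: "conv U F e = (\<lambda>_. 0)"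
  by (simp add: conv_diff_left[OF g1 ge] c1e ee fun_eq_iff)
lemma ceF: "conv U e F = (\<lambda>_. 0)"
  by (simp add: conv_diff_right ce1 ee fun_eq_iff)
lemma cFF: "conv U F F = F"
  by (simp add: conv_diff_right cF1 cFe fun_eq_iff)

lemma e_i_tel: "e_i U e i = tel U 0 {i} (\<lambda>_. e)"
proof -
  have 1: "conv (wreath U) (gbasis (tpow U (-i))) (wemb U e) = tel U (-i) {i} (\<lambda>_. e)"
  proof -
    have "conv (wreath U) (gbasis (tpow U (-i))) (wemb U e)
        = conv (wreath U) (tel U (-i) {} (\<lambda>_. d1)) (tel U 0 {0} (\<lambda>_. e))"
      by (simp add: gbasis_tpow_tel[OF grp, of "-i" "\<lambda>_. d1"] wemb_tel[OF grp ge])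
    also have "\<dots> = tel U (-i + 0) {i} (\<lambda>j. conv U (if j \<in> {} then d1 else d1) (if j + - i \<in> {0} then e else d1))"
      by (rule conv_tel_gen[OF grp]) (auto simp: ge)
    also have "\<dots> = tel U (-i) {i} (\<lambda>_. e)"
      by (auto intro!: tel_cong simp: c1e)
    finally show ?thesis .
  qed
  have "e_i U e i = conv (wreath U) (tel U (-i) {i} (\<lambda>_. e)) (tel U i {} (\<lambda>_. d1))"
    by (simp add: e_i_def 1 gbasis_tpow_tel[OF grp, of "i" "\<lambda>_. d1"])
  also have "\<dots> = tel U (-i + i) {i} (\<lambda>j. conv U (if j \<in> {i} then e else d1) (if j + - i \<in> {} then d1 else d1))"
    by (rule conv_tel_gen[OF grp]) (auto simp: ge)
  also have "\<dots> = tel U 0 {i} (\<lambda>_. e)"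
    by (auto intro!: tel_cong simp: ce1)
  finally show ?thesis .
qed

lemma f_i_tel: "f_i U e i = tel U 0 {i} (\<lambda>_. F)"
proof -
  have "gunit (wreath U) = tel U 0 {i} (\<lambda>_. d1)"
    unfolding gunit_tel[OF grp, of "\<lambda>_. d1"] by (rule tel_pad) auto
  then show ?thesis by (simp add: f_i_def e_i_tel tel_single_diff)
qed

lemma gprod_tel: "gprod_list (wreath U) (map (e_i U e) [a..b]) = tel U 0 {a..b} (\<lambda>_. e)"
proof (induction "nat (b - a + 1)" arbitrary: a)
  case 0
  then have "[a..b] = []" "{a..b} = {}" by auto
  then show ?case by (simp add: gprod_list_def gunit_tel[OF grp])
next
  case (Suc k)
  then have ab: "a \<le> b" by auto
  have l: "[a..b] = a # [a+1..b]" using ab by (simp add: upto_rec1)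
  have ih: "gprod_list (wreath U) (map (e_i U e) [a+1..b]) = tel U 0 {a+1..b} (\<lambda>_. e)"
    using Suc by auto
  have "gprod_list (wreath U) (map (e_i U e) [a..b])
      = conv (wreath U) (tel U 0 {a} (\<lambda>_. e)) (tel U 0 {a+1..b} (\<lambda>_. e))"
    using ih by (simp add: l gprod_list_def e_i_tel)
  also have "\<dots> = tel U (0 + 0) {a..b} (\<lambda>j. conv U (if j \<in> {a} then e else d1) (if j + 0 \<in> {a+1..b} then e else d1))"
    by (rule conv_tel_gen[OF grp]) (use ab in \<open>auto simp: ge\<close>)
  also have "\<dots> = tel U 0 {a..b} (\<lambda>_. e)"
    by (auto intro!: tel_cong simp: ce1 c1e)
  finally show ?case .
qed

definition chi :: "int \<Rightarrow> int \<Rightarrow> 'a \<Rightarrow> complex" where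
  "chi n j = (if j = 1 \<or> j = n then F else e)"

lemma g_chi: "galg_elem U (chi n j)" by (simp add: chi_def gF ge)

lemma q_tel: assumes "2 \<le> n" shows "q_n U e n = tel U 0 {1..n} (chi n)"
proof -
  have "conv (wreath U) (f_i U e 1) (gprod_list (wreath U) (map (e_i U e) [2..n-1]))
     = conv (wreath U) (tel U 0 {1} (\<lambda>_. F)) (tel U 0 {2..n-1} (\<lambda>_. e))"
    by (simp add: f_i_tel gprod_tel)
  also have "\<dots> = tel U (0 + 0) {1..n} (\<lambda>j. conv U (if j \<in> {1} then F else d1) (if j + 0 \<in> {2..n-1} then e else d1))"
    by (rule conv_tel_gen[OF grp]) (use assms in \<open>auto simp: ge gF\<close>)
  also have "\<dots> = tel U 0 {1..n} (\<lambda>j. if j = 1 then F else if j < n then e else d1)"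
    by (auto intro!: tel_cong simp: cF1 c1e c11)
  finally have A: "conv (wreath U) (f_i U e 1) (gprod_list (wreath U) (map (e_i U e) [2..n-1]))
     = tel U 0 {1..n} (\<lambda>j. if j = 1 then F else if j < n then e else d1)" .
  have "q_n U e n = conv (wreath U) (tel U 0 {1..n} (\<lambda>j. if j = 1 then F else if j < n then e else d1))
          (tel U 0 {n} (\<lambda>_. F))"
    unfolding q_n_def A by (simp add: f_i_tel)
  also have "\<dots> = tel U (0 + 0) {1..n} (\<lambda>j. conv U (if j \<in> {1..n} then (if j = 1 then F else if j < n then e else d1) else d1)
        (if j + 0 \<in> {n} then F else d1))"
    by (rule conv_tel_gen[OF grp]) (use assms in \<open>auto simp: ge gF g1\<close>)
  also have "\<dots> = tel U 0 {1..n} (chi n)"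
    using assms by (auto intro!: tel_cong simp: cF1 c1e c11 ce1 c1F chi_def)
  finally show ?thesis .
qed

end



theorem lemma3p2:
  fixes U :: "('a, 'b) monoid_scheme" and e :: "'a \<Rightarrow> complex" and m n m' n' :: int
  assumes "group U" and "has_torsion U" and "nontriv_projection U e"
    and "1 \<le> m" "m < n" and "1 \<le> m'" "m' < n'"
  shows "conv (wreath U)
           (conv (wreath U)
             (conv (wreath U) (q_n U e n') (gbasis (tpow U (-m')))) (gbasis (tpow U m)))
           (q_n U e n)
         = (if n = n' \<and> m = m' then q_n U e n else (\<lambda>_. 0))"
proof -
  interpret proj_setup U e
    using assms(1,3) unfolding nontriv_projection_def by (intro proj_setup.intro) auto
  have n2: "2 \<le> n" "2 \<le> n'" using assms by auto
  have chi1: "conv U (chi k j) d1 = chi k j" for k j by (simp add: chi_def cF1 ce1)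
  have s1: "conv (wreath U) (q_n U e n') (gbasis (tpow U (-m'))) = tel U (-m') {1..n'} (chi n')"
  proof -
    have "conv (wreath U) (q_n U e n') (gbasis (tpow U (-m')))
        = conv (wreath U) (tel U 0 {1..n'} (chi n')) (tel U (-m') {} (\<lambda>_. d1))"
      by (simp add: q_tel[OF n2(2)] gbasis_tpow_tel[OF grp, of "-m'" "\<lambda>_. d1"])
    also have "\<dots> = tel U (0 + -m') {1..n'} (\<lambda>j. conv U (if j \<in> {1..n'} then chi n' j else d1) (if j + 0 \<in> {} then d1 else d1))"
      by (rule conv_tel_gen[OF grp]) (auto simp: g_chi)
    also have "\<dots> = tel U (-m') {1..n'} (chi n')"
      by (auto intro!: tel_cong simp: chi1)
    finally show ?thesis .
  qed
  have s2: "conv (wreath U) (tel U (-m') {1..n'} (chi n')) (gbasis (tpow U m)) = tel U (m - m') {1..n'} (chi n')"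
  proof -
    have "conv (wreath U) (tel U (-m') {1..n'} (chi n')) (gbasis (tpow U m))
        = conv (wreath U) (tel U (-m') {1..n'} (chi n')) (tel U m {} (\<lambda>_. d1))"
      by (simp add: gbasis_tpow_tel[OF grp, of "m" "\<lambda>_. d1"])
    also have "\<dots> = tel U (-m' + m) {1..n'} (\<lambda>j. conv U (if j \<in> {1..n'} then chi n' j else d1) (if j + -m' \<in> {} then d1 else d1))"
      by (rule conv_tel_gen[OF grp]) (auto simp: g_chi)
    also have "\<dots> = tel U (m - m') {1..n'} (chi n')"
      by (auto intro!: tel_cong simp: chi1)
    finally show ?thesis .
  qed
  define D where "D = m - m'"
  define S where "S = {1..n'} \<union> {1 - D..n - D}"
  define \<Phi> where "\<Phi> = (\<lambda>j. conv U (if j \<in> {1..n'} then chi n' j else d1) (if j + D \<in> {1..n} then chi n (j + D) else d1))"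
  have s3: "conv (wreath U) (tel U D {1..n'} (chi n')) (tel U 0 {1..n} (chi n)) = tel U (D + 0) S \<Phi>"
    unfolding \<Phi>_def
  proof (rule conv_tel_gen[OF grp])
    show "finite S" by (simp add: S_def)
    show "{1..n'} \<subseteq> S" by (auto simp: S_def)
    show "{1..n} \<subseteq> (\<lambda>j. j + D) ` S"
    proof
      fix x assume "x \<in> {1..n}"
      then have "x - D \<in> S" "x = (x - D) + D" by (auto simp: S_def)
      then show "x \<in> (\<lambda>j. j + D) ` S" by blast
    qed
  qed (auto simp: g_chi)
  have LHS: "conv (wreath U)
           (conv (wreath U)
             (conv (wreath U) (q_n U e n') (gbasis (tpow U (-m')))) (gbasis (tpow U m)))
           (q_n U e n) = tel U D S \<Phi>"
    using s1 s2 s3 by (simp add: q_tel[OF n2(1)] D_def)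
  have finS: "finite S" by (simp add: S_def)
  show ?thesis
  proof (cases "n = n' \<and> m = m'")
    case True
    then have "D = 0" "S = {1..n}" by (auto simp: D_def S_def)
    then have "tel U D S \<Phi> = tel U 0 {1..n} (chi n)"
      using True by (auto intro!: tel_cong simp: \<Phi>_def chi_def cFF ee)
    then show ?thesis using True LHS q_tel[OF n2(1)] by simp
  next
    case False
    have "\<exists>j0\<in>S. \<Phi> j0 = (\<lambda>_. 0)"
    proof (cases "D > 0")
      case True
      have "1 \<in> S" "1 + D \<in> {1..n}" "chi n' 1 = F" "chi n (1 + D) = e"
        using True assms n2 by (auto simp: S_def D_def chi_def)
      then show ?thesis using n2 by (intro bexI[of _ 1]) (auto simp: \<Phi>_def cFe)
    next
      case Dle: False
      show ?thesis
      proof (cases "D < 0")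
        case True
        have "1 - D \<in> S" "1 - D \<in> {1..n'}" "1 - D + D \<in> {1..n}" "chi n' (1 - D) = e" "chi n 1 = F"
          using True assms n2 by (auto simp: S_def D_def chi_def)
        then show ?thesis by (intro bexI[of _ "1 - D"]) (auto simp: \<Phi>_def ceF)
      next
        case False
        then have D0: "D = 0" using Dle by simp
        then have nn: "n \<noteq> n'" using \<open>\<not> (n = n' \<and> m = m')\<close> by (auto simp: D_def)
        show ?thesis
        proof (cases "n < n'")
          case True
          have "n \<in> S" "n \<in> {1..n'}" "chi n' n = e" "chi n n = F"
            using True assms n2 D0 by (auto simp: S_def chi_def)
          then show ?thesis using D0 n2 by (intro bexI[of _ n]) (auto simp: \<Phi>_def ceF)
        next
          case False
          have "n' \<in> S" "n' \<in> {1..n}" "chi n' n' = F" "chi n n' = e"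
            using False nn assms n2 D0 by (auto simp: S_def chi_def)
          then show ?thesis using D0 n2 by (intro bexI[of _ n']) (auto simp: \<Phi>_def cFe)
        qed
      qed
    qed
    then obtain j0 where "j0 \<in> S" "\<Phi> j0 = (\<lambda>_. 0)" by blast
    then have "tel U D S \<Phi> = (\<lambda>_. 0)" by (intro tel_zero[OF finS])
    then show ?thesis using False LHS by (simp only: if_not_P[OF False] if_False)
  qed
qed

end
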